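(* For every network $\mathcal N=(\mathcal G,S,\rho)$, every prime power $q$ and every nonnegative integer security level $r$, the secure computing capacity of the algebraic sum $f$ over $\mathbb F_q$ satisfies $$\widehat{\mathcal C}(\mathcal N,f,r)\le \min_{\substack{(W,C)\in\mathcal W_r\times\Lambda(\mathcal N):\\ W\subseteq C,\ D_W\subseteq I_C}}\big(|C|-|W|\big).$$
   Context: Network model: $\mathcal G=(\mathcal V,\mathcal E)$ is a finite directed acyclic graph (multiple edges between two nodes allowed). For $e\in\mathcal E$, $\mathrm{tail}(e)$ and $\mathrm{head}(e)$ denote its tail and head; $\mathcal E_{\rm in}(u)$, $\mathcal E_{\rm out}(u)$ are the sets of input and output edges of node $u$. A path from node $u$ (or edge $e_1$) to node $v$ (or edge $e_m$) is a sequence of edges $(e_1,\dots,e_m)$ with $\mathrm{tail}(e_1)=u$, $\mathrm{head}(e_m)=v$, $\mathrm{tail}(e_i)=\mathrm{head}(e_{i-1})$; a single edge is a path from itself to itself. For a node $\sigma$ and edge $e$, $\sigma\to e$ means there is a path from $\sigma$ whose last edge is $e$. $S=\{\sigma_1,\dots,\sigma_s\}\subset\mathcal V$ is the set of source nodes, each with no input edges; $\rho\in\mathcal V\setminus S$ is the sink, with no output edges; every node $u\ne\rho$ has a directed path to $\rho$; the sources are exactly the nodes without input edges. $\mathcal N=(\mathcal G,S,\rho)$. For disjoint node sets $U,V$, a cut separating $V$ from $U$ is an edge set $C$ such that after deleting $C$ there is no path from any $u\in U$ to any $v\in V$; $\mathrm{mincut}(U,V)$ is the minimum size of such a cut, and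 $\mathrm{mincut}(u,v)$ for singletons. Cut sets: for $C\subseteq\mathcal E$, $D_C=\{\sigma\in S:\exists e\in C,\ \sigma\to e\}$, $I_C=\{\sigma\in S:$ there is no path from $\sigma$ to $\rho$ after deleting the edges of $C\}$; $\Lambda(\mathcal N)=\{C\subseteq\mathcal E: I_C\neq\emptyset\}$. For a nonnegative integer $r$ (the security level), $\mathcal W_r=\{W\subseteq\mathcal E:|W|\le r\}$ (it contains $\emptyset$). Secure model: $q$ is a prime power and $f:\mathbb F_q^s\to\mathbb F_q$, $f(m_1,\dots,m_s)=\sum_{i=1}^s m_i$; each edge carries one symbol of $\mathbb F_q$ per network use. For positive integers $\ell,n$, an $(\ell,n)$ secure network code is as follows. Source $\sigma_i$ holds a message $\mathbf M_i=(M_{i,1},\dots,M_{i,\ell})$ of i.i.d. uniform elements of $\mathbb F_q$ and a key $\mathbf K_i$ uniform on a finite set $\mathcal K_i$ (chosen as part of the code); all $\mathbf M_i,\mathbf K_i$ are mutually independent. For each edge $e$ there is a local encoding function: if $\mathrm{tail}(e)=\sigma_i$, a map $\mathbb F_q^\ell\times\mathcal K_i\to\mathbb F_q^n$ applied to $(\mathbf m_i,\mathbf k_i)$; otherwise a map $\prod_{d\in\mathcal E_{\rm in}(\mathrm{tail}(e))}\mathbb F_q^n\to\mathbb F_q^n$ applied to the messages on the input edges of $\mathrm{tail}(e)$. There is a decoding function $\psi:\prod_{d\in\mathcal E_{\rm in}(\rho)}\mathbb F_q^n\to\mathbb F_q^\ell$. Recursively, the message $\mathbf Y_e$ on each edge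 is a function of $(\mathbf M_S,\mathbf K_S)$, where $\mathbf M_S=(\mathbf M_1,\dots,\mathbf M_s)$, $\mathbf K_S=(\mathbf K_1,\dots,\mathbf K_s)$; $\mathbf Y_W=(\mathbf Y_e:e\in W)$. The code is admissible (for security level $r$) if (computability) for all values $\mathbf m_S,\mathbf k_S$ the decoder outputs $\sum_{i=1}^s\mathbf m_i$ (componentwise sum in $\mathbb F_q^\ell$), and (security) $I(\mathbf Y_W;\mathbf M_S)=0$ for every $W\in\mathcal W_r$. Its rate is $\ell/n$. $R\ge0$ is achievable if for every $\epsilon>0$ there is an admissible $(\ell,n)$ code with $\ell/n>R-\epsilon$. The secure computing capacity $\widehat{\mathcal C}(\mathcal N,f,r)$ is the maximum achievable rate. *)

theory Defs
  imports Complex_Main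
begin

record ('v, 'e) network =
  nodes   :: "'v set"
  edges   :: "'e set"
  tl      :: "'e \<Rightarrow> 'v"
  hd      :: "'e \<Rightarrow> 'v"
  sources :: "'v set"
  sink    :: "'v"

definition in_edges :: "('v, 'e) network \<Rightarrow> 'v \<Rightarrow> 'e set" where
  "in_edges N u = {e \<in> edges N. hd N e = u}"

definition out_edges :: "('v, 'e) network \<Rightarrow> 'v \<Rightarrow> 'e set" where
  "out_edges N u = {e \<in> edges N. tl N e = u}"

definition path_in :: "('v, 'e) network \<Rightarrow> 'e set \<Rightarrow> 'e list \<Rightarrow> bool" where
  "path_in N A es \<longleftrightarrow> es \<noteq> [] \<and> set es \<subseteq> A \<and>
     (\<forall>i. Suc i < length es \<longrightarrow> tl N (es ! Suc i) = hd N (es ! i))"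

definition node_path_in :: "('v, 'e) network \<Rightarrow> 'e set \<Rightarrow> 'v \<Rightarrow> 'v \<Rightarrow> bool" where
  "node_path_in N A u v \<longleftrightarrow>
     (\<exists>es. path_in N A es \<and> tl N (List.hd es) = u \<and> hd N (List.last es) = v)"

definition reaches_edge :: "('v, 'e) network \<Rightarrow> 'v \<Rightarrow> 'e \<Rightarrow> bool" where
  "reaches_edge N \<sigma> e \<longleftrightarrow>
     (\<exists>es. path_in N (edges N) es \<and> tl N (List.hd es) = \<sigma> \<and> List.last es = e)"

definition acyclic_net :: "('v, 'e) network \<Rightarrow> bool" where
  "acyclic_net N \<longleftrightarrow>
     \<not> (\<exists>es. path_in N (edges N) es \<and> hd N (List.last es) = tl N (List.hd es))"

definition wf_network :: "('v, 'e) network \<Rightarrow> bool" where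
  "wf_network N \<longleftrightarrow>
     finite (nodes N) \<and> finite (edges N) \<and>
     (\<forall>e \<in> edges N. tl N e \<in> nodes N \<and> hd N e \<in> nodes N) \<and>
     acyclic_net N \<and>
     sources N \<subseteq> nodes N \<and>
     sink N \<in> nodes N \<and> sink N \<notin> sources N \<and>
     out_edges N (sink N) = {} \<and>
     (\<forall>u \<in> nodes N. u \<noteq> sink N \<longrightarrow> node_path_in N (edges N) u (sink N)) \<and>
     (\<forall>u \<in> nodes N. u \<in> sources N \<longleftrightarrow> in_edges N u = {})"

definition D_set :: "('v, 'e) network \<Rightarrow> 'e set \<Rightarrow> 'v set" where
  "D_set N C = {\<sigma> \<in> sources N. \<exists>e \<in> C. reaches_edge N \<sigma> e}"

definition I_set :: "('v, 'e) network \<Rightarrow> 'e set \<Rightarrow> 'v set" where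
  "I_set N C = {\<sigma> \<in> sources N. \<not> node_path_in N (edges N - C) \<sigma> (sink N)}"

definition Lambda_set :: "('v, 'e) network \<Rightarrow> 'e set set" where
  "Lambda_set N = {C. C \<subseteq> edges N \<and> I_set N C \<noteq> {}}"

definition W_set :: "('v, 'e) network \<Rightarrow> nat \<Rightarrow> 'e set set" where
  "W_set N r = {W. W \<subseteq> edges N \<and> card W \<le> r}"

definition cut_bound :: "('v, 'e) network \<Rightarrow> nat \<Rightarrow> real" where
  "cut_bound N r = Min {real (card C) - real (card W) | W C.
      W \<in> W_set N r \<and> C \<in> Lambda_set N \<and> W \<subseteq> C \<and> D_set N W \<subseteq> I_set N C}"

text \<open>Vectors in F_q^l are lists of length l.  Keys of source sigma are drawn
  uniformly from a finite nonempty set keys sigma of natural numbers (any finite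
  key set can be relabelled this way).  enc_src e is the local encoding function
  of an edge leaving a source, applied to (message, key) of its tail; enc e is
  the local encoding function of any other edge, applied to the messages on the
  input edges of its tail; dec is the decoding function at the sink.\<close>
record ('v, 'e, 'f) scode =
  keys    :: "'v \<Rightarrow> nat set"
  enc_src :: "'e \<Rightarrow> 'f list \<Rightarrow> nat \<Rightarrow> 'f list"
  enc     :: "'e \<Rightarrow> ('e \<Rightarrow> 'f list) \<Rightarrow> 'f list"
  dec     :: "('e \<Rightarrow> 'f list) \<Rightarrow> 'f list"

definition restr :: "'e set \<Rightarrow> ('e \<Rightarrow> 'f list) \<Rightarrow> 'e \<Rightarrow> 'f list" where
  "restr A Y = (\<lambda>d. if d \<in> A then Y d else [])"

text \<open>Since the graph is acyclic, iterating it
  card(edges) times from any start gives the recursively defined edge messages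
  Y_e as functions of the source messages m and keys k.\<close>
definition code_step :: "('v, 'e) network \<Rightarrow> ('v, 'e, 'f) scode \<Rightarrow>
    ('v \<Rightarrow> 'f list) \<Rightarrow> ('v \<Rightarrow> nat) \<Rightarrow> ('e \<Rightarrow> 'f list) \<Rightarrow> ('e \<Rightarrow> 'f list)" where
  "code_step N c m k Y = (\<lambda>e.
     if e \<in> edges N then
       (if tl N e \<in> sources N then enc_src c e (m (tl N e)) (k (tl N e))
        else enc c e (restr (in_edges N (tl N e)) Y))
     else [])"

definition edge_msg :: "('v, 'e) network \<Rightarrow> ('v, 'e, 'f) scode \<Rightarrow>
    ('v \<Rightarrow> 'f list) \<Rightarrow> ('v \<Rightarrow> nat) \<Rightarrow> 'e \<Rightarrow> 'f list" where
  "edge_msg N c m k = (code_step N c m k ^^ card (edges N)) (\<lambda>_. [])"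

text \<open>The probability distribution is uniform on this finite set, which is exactly
  the joint law of independent uniform messages and keys.\<close>
definition sample_space :: "('v, 'e) network \<Rightarrow> ('v, 'e, 'f) scode \<Rightarrow> nat \<Rightarrow>
    (('v \<Rightarrow> 'f list) \<times> ('v \<Rightarrow> nat)) set" where
  "sample_space N c l = {(m, k).
     (\<forall>\<sigma>. (\<sigma> \<in> sources N \<longrightarrow> length (m \<sigma>) = l \<and> k \<sigma> \<in> keys c \<sigma>) \<and>
          (\<sigma> \<notin> sources N \<longrightarrow> m \<sigma> = [] \<and> k \<sigma> = 0))}"

definition uprob :: "'a set \<Rightarrow> ('a \<Rightarrow> bool) \<Rightarrow> real" where
  "uprob \<Omega> P = real (card {\<omega> \<in> \<Omega>. P \<omega>}) / real (card \<Omega>)"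

definition mutual_info :: "'a set \<Rightarrow> ('a \<Rightarrow> 'b) \<Rightarrow> ('a \<Rightarrow> 'c) \<Rightarrow> real" where
  "mutual_info \<Omega> X Y =
     (\<Sum>(x, y) \<in> (\<lambda>\<omega>. (X \<omega>, Y \<omega>)) ` \<Omega>.
        uprob \<Omega> (\<lambda>\<omega>. X \<omega> = x \<and> Y \<omega> = y) *
        log 2 (uprob \<Omega> (\<lambda>\<omega>. X \<omega> = x \<and> Y \<omega> = y) /
               (uprob \<Omega> (\<lambda>\<omega>. X \<omega> = x) * uprob \<Omega> (\<lambda>\<omega>. Y \<omega> = y))))"

definition alg_sum :: "('v, 'e) network \<Rightarrow> nat \<Rightarrow> ('v \<Rightarrow> 'f::field list) \<Rightarrow> 'f list" where
  "alg_sum N l m = map (\<lambda>j. \<Sum>\<sigma> \<in> sources N. m \<sigma> ! j) [0..<l]"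

definition admissible :: "('v, 'e) network \<Rightarrow> nat \<Rightarrow> nat \<Rightarrow> nat \<Rightarrow>
    ('v, 'e, 'f::{finite,field}) scode \<Rightarrow> bool" where
  "admissible N r l n c \<longleftrightarrow>
     0 < l \<and> 0 < n \<and>
     (\<forall>\<sigma> \<in> sources N. finite (keys c \<sigma>) \<and> keys c \<sigma> \<noteq> {}) \<and>
     (\<forall>e x key. length (enc_src c e x key) = n) \<and>
     (\<forall>e Y. length (enc c e Y) = n) \<and>
     \<comment> \<open>computability\<close>
     (\<forall>(m, k) \<in> sample_space N c l.
        dec c (restr (in_edges N (sink N)) (edge_msg N c m k)) = alg_sum N l m) \<and>
     \<comment> \<open>security\<close>
     (\<forall>W \<in> W_set N r.
        mutual_info (sample_space N c l)
          (\<lambda>(m, k). restr W (edge_msg N c m k)) (\<lambda>(m, k). m) = 0)"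

definition achievable :: "'f::{finite,field} itself \<Rightarrow> ('v, 'e) network \<Rightarrow> nat \<Rightarrow> real \<Rightarrow> bool" where
  "achievable F N r R \<longleftrightarrow> 0 \<le> R \<and>
     (\<forall>\<epsilon>>0. \<exists>l n (c :: ('v, 'e, 'f) scode).
        admissible N r l n c \<and> real l / real n > R - \<epsilon>)"

end

theory Submission
  imports Defs "HOL-Library.FuncSet"
begin


definition Rel :: "('v, 'e) network \<Rightarrow> ('e \<times> 'e) set" where
  "Rel N = {(d,e). d \<in> edges N \<and> e \<in> edges N \<and> hd N d = tl N e}"

lemma Rel_trancl_path:
  assumes "(d,e) \<in> (Rel N)\<^sup>+"
  shows "\<exists>es. path_in N (edges N) es \<and> List.hd es = d \<and> hd N (List.last es) = tl N e"
  using assms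
proof (induction rule: trancl_induct)
  case (base e)
  then show ?case by (intro exI[of _ "[d]"]) (auto simp: Rel_def path_in_def)
next
  case (step e f)
  then obtain es where es: "path_in N (edges N) es" "List.hd es = d" "hd N (List.last es) = tl N e"
    by blast
  have ef: "e \<in> edges N" "hd N e = tl N f" using step(2) by (auto simp: Rel_def)
  have "path_in N (edges N) (es @ [e])"
    unfolding path_in_def
  proof (intro conjI allI impI)
    show "es @ [e] \<noteq> []" by simp
    show "set (es @ [e]) \<subseteq> edges N" using es(1) ef by (auto simp: path_in_def)
    fix i assume i: "Suc i < length (es @ [e])"
    show "tl N ((es @ [e]) ! Suc i) = hd N ((es @ [e]) ! i)"
    proof (cases "Suc i < length es")
      case True
      then show ?thesis using es(1) by (auto simp: path_in_def nth_append)
    next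
      case False
      then have "Suc i = length es" using i by simp
      then have "i = length es - Suc 0" by simp
      then show ?thesis using es(1,3) \<open>Suc i = length es\<close> by (auto simp: path_in_def nth_append last_conv_nth)
    qed
  qed
  moreover have "List.hd (es @ [e]) = d" using es(1,2) by (auto simp: path_in_def)
  ultimately show ?case using ef by (intro exI[of _ "es @ [e]"]) auto
qed

lemma Rel_acyclic: "acyclic_net N \<Longrightarrow> acyclic (Rel N)"
  unfolding acyclic_def acyclic_net_def
  using Rel_trancl_path by metis

lemma Rel_finite: "finite (edges N) \<Longrightarrow> finite (Rel N)"
  by (rule finite_subset[of _ "edges N \<times> edges N"]) (auto simp: Rel_def)

lemma Rel_wf: "finite (edges N) \<Longrightarrow> acyclic_net N \<Longrightarrow> wf (Rel N)"
  using finite_acyclic_wf Rel_finite Rel_acyclic by blast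

definition hgt :: "('v, 'e) network \<Rightarrow> 'e \<Rightarrow> nat" where
  "hgt N e = card {d. (d,e) \<in> (Rel N)\<^sup>+}"

lemma anc_sub: "{d. (d,e) \<in> (Rel N)\<^sup>+} \<subseteq> edges N"
  by (auto elim: converse_tranclE simp: Rel_def)

lemma hgt_less:
  assumes "finite (edges N)" "acyclic_net N" "(d,e) \<in> Rel N"
  shows "hgt N d < hgt N e"
proof -
  have "{x. (x,d) \<in> (Rel N)\<^sup>+} \<subset> {x. (x,e) \<in> (Rel N)\<^sup>+}"
  proof
    show "{x. (x,d) \<in> (Rel N)\<^sup>+} \<subseteq> {x. (x,e) \<in> (Rel N)\<^sup>+}"
      using trancl_into_trancl[OF _ assms(3)] by blast
    have "(d,d) \<notin> (Rel N)\<^sup>+" using Rel_acyclic[OF assms(2)] by (auto simp: acyclic_def)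
    moreover have "(d,e) \<in> (Rel N)\<^sup>+" using assms(3) by auto
    ultimately show "{x. (x,d) \<in> (Rel N)\<^sup>+} \<noteq> {x. (x,e) \<in> (Rel N)\<^sup>+}" by blast
  qed
  then show ?thesis unfolding hgt_def
    by (intro psubset_card_mono) (rule finite_subset[OF anc_sub assms(1)])
qed

lemma hgt_bound:
  assumes "finite (edges N)" "acyclic_net N" "e \<in> edges N"
  shows "hgt N e < card (edges N)"
proof -
  have "(e,e) \<notin> (Rel N)\<^sup>+" using Rel_acyclic[OF assms(2)] by (auto simp: acyclic_def)
  then have ne: "e \<notin> {d. (d,e) \<in> (Rel N)\<^sup>+}" by simp
  have "{d. (d,e) \<in> (Rel N)\<^sup>+} \<noteq> edges N"
  proof
    assume "{d. (d,e) \<in> (Rel N)\<^sup>+} = edges N"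
    then show False using ne assms(3) by simp
  qed
  then have "{d. (d,e) \<in> (Rel N)\<^sup>+} \<subset> edges N" using anc_sub by (rule psubsetI[rotated])
  then show ?thesis unfolding hgt_def by (rule psubset_card_mono[OF assms(1)])
qed

lemma code_step_app:
  "code_step N c m k Y e = (if e \<in> edges N then
       (if tl N e \<in> sources N then enc_src c e (m (tl N e)) (k (tl N e))
        else enc c e (restr (in_edges N (tl N e)) Y))
     else [])"
  by (simp add: code_step_def)

lemma iter_nonedge: "e \<notin> edges N \<Longrightarrow> (code_step N c m k ^^ j) (\<lambda>_. []) e = []"
  by (cases j) (auto simp: code_step_def)

lemma iter_stable:
  assumes "finite (edges N)" "acyclic_net N"
  shows "\<forall>j i. hgt N e < j \<longrightarrow> hgt N e < i \<longrightarrow>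
     (code_step N c m k ^^ j) (\<lambda>_. []) e = (code_step N c m k ^^ i) (\<lambda>_. []) e"
proof (induction e rule: measure_induct_rule[of "hgt N"])
  case (less e)
  show ?case
  proof (intro allI impI)
    fix j i assume j: "hgt N e < j" and i: "hgt N e < i"
    obtain j' where j': "j = Suc j'" using j by (cases j) auto
    obtain i' where i': "i = Suc i'" using i by (cases i) auto
    have R: "restr (in_edges N (tl N e)) ((code_step N c m k ^^ j') (\<lambda>_. []))
           = restr (in_edges N (tl N e)) ((code_step N c m k ^^ i') (\<lambda>_. []))"
      if "e \<in> edges N"
    proof
      fix d
      show "restr (in_edges N (tl N e)) ((code_step N c m k ^^ j') (\<lambda>_. [])) d
           = restr (in_edges N (tl N e)) ((code_step N c m k ^^ i') (\<lambda>_. [])) d"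
      proof (cases "d \<in> in_edges N (tl N e)")
        case True
        then have "(d,e) \<in> Rel N" using that by (auto simp: Rel_def in_edges_def)
        then have hd: "hgt N d < hgt N e" by (rule hgt_less[OF assms])
        then have Q: "\<forall>j i. hgt N d < j \<longrightarrow> hgt N d < i \<longrightarrow>
           (code_step N c m k ^^ j) (\<lambda>_. []) d = (code_step N c m k ^^ i) (\<lambda>_. []) d"
          by (rule less)
        have h1: "hgt N d < j'" using hd j j' by simp
        have h2: "hgt N d < i'" using hd i i' by simp
        have "(code_step N c m k ^^ j') (\<lambda>_. []) d = (code_step N c m k ^^ i') (\<lambda>_. []) d"
          using Q h1 h2 by blast
        then show ?thesis using True by (simp add: restr_def)
      qed (auto simp: restr_def)
    qed
    have J: "(code_step N c m k ^^ j) (\<lambda>_. []) e = code_step N c m k ((code_step N c m k ^^ j') (\<lambda>_. [])) e"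
      by (simp only: j' funpow.simps(2) o_apply)
    have I: "(code_step N c m k ^^ i) (\<lambda>_. []) e = code_step N c m k ((code_step N c m k ^^ i') (\<lambda>_. [])) e"
      by (simp only: i' funpow.simps(2) o_apply)
    show "(code_step N c m k ^^ j) (\<lambda>_. []) e = (code_step N c m k ^^ i) (\<lambda>_. []) e"
      unfolding J I
    proof (cases "e \<in> edges N")
      case True
      then show "code_step N c m k ((code_step N c m k ^^ j') (\<lambda>_. [])) e = code_step N c m k ((code_step N c m k ^^ i') (\<lambda>_. [])) e"
        unfolding code_step_app[of N c m k "(code_step N c m k ^^ j') (\<lambda>_. [])" e]
          code_step_app[of N c m k "(code_step N c m k ^^ i') (\<lambda>_. [])" e]
        using R[OF True] by simp
    qed (simp only: code_step_app[of N c m k _ e] if_False)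
  qed
qed

lemma wf_fin: "wf_network N \<Longrightarrow> finite (edges N)"
  unfolding wf_network_def by blast

lemma wf_acyc: "wf_network N \<Longrightarrow> acyclic_net N"
  unfolding wf_network_def by blast

lemma edge_msg_fix:
  assumes "wf_network N"
  shows "edge_msg N c m k = code_step N c m k (edge_msg N c m k)"
proof
  fix e
  have fin: "finite (edges N)" "acyclic_net N" using wf_fin[OF assms] wf_acyc[OF assms] by auto
  show "edge_msg N c m k e = code_step N c m k (edge_msg N c m k) e"
  proof (cases "e \<in> edges N")
    case True
    have h: "hgt N e < card (edges N)" by (rule hgt_bound[OF fin True])
    then have h2: "hgt N e < Suc (card (edges N))" by simp
    have Q: "\<forall>j i. hgt N e < j \<longrightarrow> hgt N e < i \<longrightarrow>
     (code_step N c m k ^^ j) (\<lambda>_. []) e = (code_step N c m k ^^ i) (\<lambda>_. []) e"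
      by (rule iter_stable[OF fin])
    have "(code_step N c m k ^^ card (edges N)) (\<lambda>_. []) e = (code_step N c m k ^^ Suc (card (edges N))) (\<lambda>_. []) e"
      using Q h h2 by blast
    then show ?thesis unfolding edge_msg_def by (simp only: funpow.simps(2) o_apply)
  next
    case False
    have "edge_msg N c m k e = []" unfolding edge_msg_def by (rule iter_nonedge[OF False])
    moreover have "code_step N c m k (edge_msg N c m k) e = []"
      by (simp only: code_step_app[of N c m k "edge_msg N c m k" e] False if_False)
    ultimately show ?thesis by simp
  qed
qed




lemma locality:
  assumes wfN: "wf_network N"
    and G: "\<forall>e\<in>G. e \<in> edges N \<longrightarrow> edge_msg N c m k e = edge_msg N c m' k' e \<or>
        (tl N e \<in> sources N \<and> m (tl N e) = m' (tl N e) \<and> k (tl N e) = k' (tl N e)) \<or>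
        (tl N e \<notin> sources N \<and> in_edges N (tl N e) \<subseteq> G)"
  shows "e \<in> G \<Longrightarrow> edge_msg N c m k e = edge_msg N c m' k' e"
proof (induction e rule: wf_induct_rule[OF Rel_wf[OF wf_fin[OF wfN] wf_acyc[OF wfN]]])
  fix e assume IH: "\<And>d. (d, e) \<in> Rel N \<Longrightarrow> d \<in> G \<Longrightarrow> edge_msg N c m k d = edge_msg N c m' k' d"
    and eG: "e \<in> G"
  have e1: "edge_msg N c m k e = code_step N c m k (edge_msg N c m k) e"
    by (rule fun_cong[OF edge_msg_fix[OF wfN]])
  have e2: "edge_msg N c m' k' e = code_step N c m' k' (edge_msg N c m' k') e"
    by (rule fun_cong[OF edge_msg_fix[OF wfN]])
  note a1 = code_step_app[of N c m k "edge_msg N c m k" e]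
  note a2 = code_step_app[of N c m' k' "edge_msg N c m' k'" e]
  show "edge_msg N c m k e = edge_msg N c m' k' e"
  proof (cases "e \<in> edges N")
    case False
    then show ?thesis unfolding e1 e2 a1 a2 by simp
  next
    case True
    have "edge_msg N c m k e = edge_msg N c m' k' e \<or>
        (tl N e \<in> sources N \<and> m (tl N e) = m' (tl N e) \<and> k (tl N e) = k' (tl N e)) \<or>
        (tl N e \<notin> sources N \<and> in_edges N (tl N e) \<subseteq> G)"
      using G eG True by blast
    then consider "edge_msg N c m k e = edge_msg N c m' k' e"
      | "tl N e \<in> sources N \<and> m (tl N e) = m' (tl N e) \<and> k (tl N e) = k' (tl N e)"
      | "tl N e \<notin> sources N \<and> in_edges N (tl N e) \<subseteq> G"
      by blast
    then show ?thesis
    proof cases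
      case 1 then show ?thesis .
    next
      case 2
      then show ?thesis unfolding e1 e2 a1 a2 using True by simp
    next
      case 3
      have "restr (in_edges N (tl N e)) (edge_msg N c m k) = restr (in_edges N (tl N e)) (edge_msg N c m' k')"
      proof
        fix d show "restr (in_edges N (tl N e)) (edge_msg N c m k) d = restr (in_edges N (tl N e)) (edge_msg N c m' k') d"
        proof (cases "d \<in> in_edges N (tl N e)")
          case True
          then have "(d,e) \<in> Rel N" using \<open>e \<in> edges N\<close> unfolding Rel_def in_edges_def by simp
          moreover have "d \<in> G" using True 3 by blast
          ultimately have "edge_msg N c m k d = edge_msg N c m' k' d" by (rule IH)
          then show ?thesis using True by (simp add: restr_def)
        next
          case False
          then show ?thesis by (simp add: restr_def)
        qed
      qed
      then show ?thesis unfolding e1 e2 a1 a2 using 3 True by simp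
    qed
  qed
qed

lemma sum_uprob_image:
  assumes "finite \<Omega>" "\<Omega> \<noteq> {}"
  shows "(\<Sum>z\<in>Z`\<Omega>. uprob \<Omega> (\<lambda>\<omega>. Z \<omega> = z)) = 1"
proof -
  have "\<Omega> = (\<Union>z\<in>Z`\<Omega>. {\<omega>\<in>\<Omega>. Z \<omega> = z})" by auto
  moreover have "card (\<Union>z\<in>Z`\<Omega>. {\<omega>\<in>\<Omega>. Z \<omega> = z}) = (\<Sum>z\<in>Z`\<Omega>. card {\<omega>\<in>\<Omega>. Z \<omega> = z})"
    by (rule card_UN_disjoint) (use assms(1) in auto)
  ultimately have "card \<Omega> = (\<Sum>z\<in>Z`\<Omega>. card {\<omega>\<in>\<Omega>. Z \<omega> = z})" by simp
  moreover have "card \<Omega> > 0" using assms by auto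
  ultimately have s1: "(\<Sum>z\<in>Z`\<Omega>. real (card {\<omega>\<in>\<Omega>. Z \<omega> = z})) = real (card \<Omega>)" and pos: "card \<Omega> > 0"
    by (simp_all only: of_nat_sum[symmetric])
  then show ?thesis unfolding uprob_def sum_divide_distrib[symmetric] by simp
qed

lemma uprob_pos: "finite \<Omega> \<Longrightarrow> \<omega> \<in> \<Omega> \<Longrightarrow> P \<omega> \<Longrightarrow> uprob \<Omega> P > 0"
proof -
  assume a: "finite \<Omega>" "\<omega> \<in> \<Omega>" "P \<omega>"
  have "card {\<omega>\<in>\<Omega>. P \<omega>} > 0" using a by (auto simp: card_gt_0_iff)
  moreover have "card \<Omega> > 0" using a by (auto simp: card_gt_0_iff)
  ultimately show ?thesis unfolding uprob_def by simp
qed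

lemma log_ineq:
  fixes p q :: real assumes "p > 0" "q > 0"
  shows "p * log 2 (p / q) \<ge> (p - q) / ln 2"
proof -
  have A: "ln (q / p) \<le> q / p - 1" by (rule ln_le_minus_one) (use assms in simp)
  have B: "ln (p / q) = ln p - ln q" using ln_div[of p q] assms by auto
  have C: "ln (q / p) = ln q - ln p" using ln_div[of q p] assms by auto
  have D: "ln (p / q) \<ge> 1 - q / p" using A B C by linarith
  have E: "p * ln (p / q) \<ge> p * (1 - q / p)" by (rule mult_left_mono[OF D]) (use assms in simp)
  have F: "p * (1 - q / p) = p - q" using assms by (simp add: field_simps)
  have G: "p * ln (p / q) \<ge> p - q" using E F by linarith
  have H: "(p * ln (p / q)) / ln 2 \<ge> (p - q) / ln 2"
    by (rule divide_right_mono[OF G]) simp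
  have I: "p * log 2 (p / q) = (p * ln (p / q)) / ln 2" unfolding log_def by simp
  show ?thesis using H I by linarith
qed



lemma MI_zero:
  assumes fin: "finite \<Omega>" and ne: "\<Omega> \<noteq> {}" and mi: "mutual_info \<Omega> X Y = 0"
    and a: "a \<in> \<Omega>" and b: "b \<in> \<Omega>"
  shows "\<exists>\<omega>\<in>\<Omega>. X \<omega> = X a \<and> Y \<omega> = Y b"
proof (rule ccontr)
  assume nex: "\<not> ?thesis"
  define P where "P = (\<lambda>\<omega>. (X \<omega>, Y \<omega>)) ` \<Omega>"
  define p where "p = (\<lambda>x y. uprob \<Omega> (\<lambda>\<omega>. X \<omega> = x \<and> Y \<omega> = y))"
  define px where "px = (\<lambda>x. uprob \<Omega> (\<lambda>\<omega>. X \<omega> = x))"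
  define py where "py = (\<lambda>y. uprob \<Omega> (\<lambda>\<omega>. Y \<omega> = y))"
  have finP: "finite P" using fin by (simp add: P_def)
  have pos: "p x y > 0" "px x > 0" "py y > 0" if "(x,y) \<in> P" for x y
    using that fin by (auto simp: P_def p_def px_def py_def intro: uprob_pos)
  have "mutual_info \<Omega> X Y = (\<Sum>(x,y)\<in>P. p x y * log 2 (p x y / (px x * py y)))"
    unfolding mutual_info_def P_def p_def px_def py_def by simp
  also have "\<dots> \<ge> (\<Sum>(x,y)\<in>P. (p x y - px x * py y) / ln 2)"
    by (rule sum_mono) (use pos log_ineq in auto)
  finally have A: "(\<Sum>(x,y)\<in>P. (p x y - px x * py y) / ln 2) \<le> 0" using mi by simp
  have sp: "(\<Sum>(x,y)\<in>P. p x y) = 1"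
  proof -
    have "(\<Sum>(x,y)\<in>P. p x y) = (\<Sum>z\<in>P. uprob \<Omega> (\<lambda>\<omega>. (X \<omega>, Y \<omega>) = z))"
      by (rule sum.cong) (auto simp: p_def)
    also have "\<dots> = 1" unfolding P_def by (rule sum_uprob_image[OF fin ne])
    finally show ?thesis .
  qed
  have "(\<Sum>(x,y)\<in>P. (p x y - px x * py y) / ln 2) = ((\<Sum>(x,y)\<in>P. p x y) - (\<Sum>(x,y)\<in>P. px x * py y)) / ln 2"
    by (simp add: sum_divide_distrib[symmetric] sum_subtractf case_prod_unfold)
  with A sp have B: "(\<Sum>(x,y)\<in>P. px x * py y) \<ge> 1"
    by (simp add: divide_le_0_iff)
  define Q where "Q = X ` \<Omega> \<times> Y ` \<Omega>"
  have finQ: "finite Q" using fin by (simp add: Q_def)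
  have sQ: "(\<Sum>(x,y)\<in>Q. px x * py y) = 1"
  proof -
    have "(\<Sum>(x,y)\<in>Q. px x * py y) = (\<Sum>x\<in>X`\<Omega>. px x) * (\<Sum>y\<in>Y`\<Omega>. py y)"
      unfolding Q_def by (simp add: sum_product sum.cartesian_product)
    also have "\<dots> = 1" unfolding px_def py_def using sum_uprob_image[OF fin ne, of X] sum_uprob_image[OF fin ne, of Y] by simp
    finally show ?thesis .
  qed
  have PQ: "P \<subseteq> Q - {(X a, Y b)}" using nex by (auto simp: P_def Q_def)
  have ab: "(X a, Y b) \<in> Q" using a b by (auto simp: Q_def)
  have nonneg: "\<And>z. z \<in> Q \<Longrightarrow> 0 \<le> (case z of (x,y) \<Rightarrow> px x * py y)"
    by (auto simp: px_def py_def uprob_def)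
  have "(\<Sum>(x,y)\<in>P. px x * py y) \<le> (\<Sum>(x,y)\<in>Q - {(X a, Y b)}. px x * py y)"
    by (rule sum_mono2) (use finQ PQ nonneg in auto)
  also have "\<dots> = (\<Sum>(x,y)\<in>Q. px x * py y) - px (X a) * py (Y b)"
    using finQ ab by (simp add: sum_diff1)
  also have "\<dots> < 1" using sQ uprob_pos[OF fin a, of "\<lambda>\<omega>. X \<omega> = X a"] uprob_pos[OF fin b, of "\<lambda>\<omega>. Y \<omega> = Y b"]
    by (simp add: px_def py_def)
  finally show False using B by simp
qed




lemma path_snoc:
  assumes "path_in N A es" "e \<in> A" "tl N e = hd N (List.last es)"
  shows "path_in N A (es @ [e])"
  unfolding path_in_def
proof (intro conjI allI impI)
  show "es @ [e] \<noteq> []" by simp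
  show "set (es @ [e]) \<subseteq> A" using assms by (auto simp: path_in_def)
  fix i assume i: "Suc i < length (es @ [e])"
  show "tl N ((es @ [e]) ! Suc i) = hd N ((es @ [e]) ! i)"
  proof (cases "Suc i < length es")
    case True
    then show ?thesis using assms(1) by (auto simp: path_in_def nth_append)
  next
    case False
    then have "Suc i = length es" using i by simp
    then have "i = length es - Suc 0" by simp
    then show ?thesis using assms \<open>Suc i = length es\<close> by (auto simp: path_in_def nth_append last_conv_nth)
  qed
qed

lemma path_cons:
  assumes "path_in N A es" "d \<in> A" "tl N (List.hd es) = hd N d"
  shows "path_in N A (d # es)"
  unfolding path_in_def
proof (intro conjI allI impI)
  show "d # es \<noteq> []" by simp
  show "set (d # es) \<subseteq> A" using assms by (auto simp: path_in_def)
  fix i assume i: "Suc i < length (d # es)"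
  show "tl N ((d # es) ! Suc i) = hd N ((d # es) ! i)"
  proof (cases i)
    case 0
    then show ?thesis using assms by (auto simp: path_in_def hd_conv_nth)
  next
    case (Suc j)
    then show ?thesis using assms(1) i by (auto simp: path_in_def)
  qed
qed




lemma wf_src_fin: "wf_network N \<Longrightarrow> finite (sources N)"
proof -
  assume "wf_network N"
  then have "finite (nodes N)" "sources N \<subseteq> nodes N" unfolding wf_network_def by blast+
  then show ?thesis by (rule finite_subset[rotated])
qed

lemma loc_D:
  assumes wfN: "wf_network N"
    and ag: "\<forall>\<sigma>\<in>D_set N W. m \<sigma> = m' \<sigma> \<and> k \<sigma> = k' \<sigma>"
    and w: "w \<in> W"
  shows "edge_msg N c m k w = edge_msg N c m' k' w"
proof -
  define G where "G = {e. \<forall>\<sigma>\<in>sources N. reaches_edge N \<sigma> e \<longrightarrow> \<sigma> \<in> D_set N W}"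
  have cond: "\<forall>e\<in>G. e \<in> edges N \<longrightarrow> edge_msg N c m k e = edge_msg N c m' k' e \<or>
        (tl N e \<in> sources N \<and> m (tl N e) = m' (tl N e) \<and> k (tl N e) = k' (tl N e)) \<or>
        (tl N e \<notin> sources N \<and> in_edges N (tl N e) \<subseteq> G)"
  proof (intro ballI impI)
    fix e assume eG: "e \<in> G" and eE: "e \<in> edges N"
    show "edge_msg N c m k e = edge_msg N c m' k' e \<or>
        (tl N e \<in> sources N \<and> m (tl N e) = m' (tl N e) \<and> k (tl N e) = k' (tl N e)) \<or>
        (tl N e \<notin> sources N \<and> in_edges N (tl N e) \<subseteq> G)"
    proof (cases "tl N e \<in> sources N")
      case True
      have "path_in N (edges N) [e]" using eE unfolding path_in_def by simp
      then have "reaches_edge N (tl N e) e" unfolding reaches_edge_def by force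
      then have "tl N e \<in> D_set N W" using eG True unfolding G_def by blast
      then show ?thesis using ag True by blast
    next
      case False
      have "in_edges N (tl N e) \<subseteq> G"
      proof
        fix d assume d: "d \<in> in_edges N (tl N e)"
        show "d \<in> G" unfolding G_def
        proof (intro CollectI ballI impI)
          fix \<sigma> assume \<sigma>: "\<sigma> \<in> sources N" and r: "reaches_edge N \<sigma> d"
          then obtain es where es: "path_in N (edges N) es" "tl N (List.hd es) = \<sigma>" "List.last es = d"
            unfolding reaches_edge_def by blast
          have ne: "es \<noteq> []" using es(1) unfolding path_in_def by blast
          have "tl N e = hd N (List.last es)" using d es(3) unfolding in_edges_def by simp
          then have "path_in N (edges N) (es @ [e])" using path_snoc[OF es(1) eE] by blast
          moreover have "tl N (List.hd (es @ [e])) = \<sigma>" using ne es(2) by simp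
          moreover have "List.last (es @ [e]) = e" by simp
          ultimately have "reaches_edge N \<sigma> e" unfolding reaches_edge_def by blast
          then show "\<sigma> \<in> D_set N W" using eG \<sigma> unfolding G_def by blast
        qed
      qed
      then show ?thesis using False by blast
    qed
  qed
  have "w \<in> G" unfolding G_def D_set_def using w by blast
  then show ?thesis using locality[OF wfN cond] by blast
qed

lemma loc_I:
  assumes wfN: "wf_network N"
    and agC: "\<forall>e\<in>C. edge_msg N c m k e = edge_msg N c m' k' e"
    and ag: "\<forall>\<sigma>\<in>sources N - I_set N C. m \<sigma> = m' \<sigma> \<and> k \<sigma> = k' \<sigma>"
  shows "restr (in_edges N (sink N)) (edge_msg N c m k) = restr (in_edges N (sink N)) (edge_msg N c m' k')"
proof -
  define G where "G = {e. e \<in> C \<or> (\<exists>es. path_in N (edges N - C) es \<and> List.hd es = e \<and> hd N (List.last es) = sink N)}"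
  have cond: "\<forall>e\<in>G. e \<in> edges N \<longrightarrow> edge_msg N c m k e = edge_msg N c m' k' e \<or>
        (tl N e \<in> sources N \<and> m (tl N e) = m' (tl N e) \<and> k (tl N e) = k' (tl N e)) \<or>
        (tl N e \<notin> sources N \<and> in_edges N (tl N e) \<subseteq> G)"
  proof (intro ballI impI)
    fix e assume eG: "e \<in> G" and eE: "e \<in> edges N"
    show "edge_msg N c m k e = edge_msg N c m' k' e \<or>
        (tl N e \<in> sources N \<and> m (tl N e) = m' (tl N e) \<and> k (tl N e) = k' (tl N e)) \<or>
        (tl N e \<notin> sources N \<and> in_edges N (tl N e) \<subseteq> G)"
    proof (cases "e \<in> C")
      case True
      then show ?thesis using agC by blast
    next
      case False
      then obtain es where es: "path_in N (edges N - C) es" "List.hd es = e" "hd N (List.last es) = sink N"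
        using eG unfolding G_def by blast
      have ne: "es \<noteq> []" using es(1) unfolding path_in_def by blast
      show ?thesis
      proof (cases "tl N e \<in> sources N")
        case True
        have "node_path_in N (edges N - C) (tl N e) (sink N)"
          unfolding node_path_in_def using es by blast
        then have "tl N e \<notin> I_set N C" unfolding I_set_def by blast
        then show ?thesis using ag True by blast
      next
        case F2: False
        have "in_edges N (tl N e) \<subseteq> G"
        proof
          fix d assume d: "d \<in> in_edges N (tl N e)"
          show "d \<in> G"
          proof (cases "d \<in> C")
            case True then show ?thesis unfolding G_def by blast
          next
            case False
            have dE: "d \<in> edges N - C" using d False unfolding in_edges_def by blast
            have "tl N (List.hd es) = hd N d" using d es(2) unfolding in_edges_def by simp
            then have "path_in N (edges N - C) (d # es)" by (rule path_cons[OF es(1) dE])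
            moreover have "hd N (List.last (d # es)) = sink N" using ne es(3) by simp
            ultimately show ?thesis unfolding G_def by (intro CollectI disjI2 exI[of _ "d # es"]) simp
          qed
        qed
        then show ?thesis using F2 by blast
      qed
    qed
  qed
  show ?thesis
  proof
    fix d
    show "restr (in_edges N (sink N)) (edge_msg N c m k) d = restr (in_edges N (sink N)) (edge_msg N c m' k') d"
    proof (cases "d \<in> in_edges N (sink N)")
      case True
      have "d \<in> G"
      proof (cases "d \<in> C")
        case True then show ?thesis unfolding G_def by blast
      next
        case False
        then have "path_in N (edges N - C) [d]" using \<open>d \<in> in_edges N (sink N)\<close>
          unfolding path_in_def in_edges_def by simp
        moreover have "hd N (List.last [d]) = sink N" using \<open>d \<in> in_edges N (sink N)\<close>
          unfolding in_edges_def by simp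
        ultimately show ?thesis unfolding G_def by (intro CollectI disjI2 exI[of _ "[d]"]) simp
      qed
      then have "edge_msg N c m k d = edge_msg N c m' k' d" using locality[OF wfN cond] by blast
      then show ?thesis by (simp add: restr_def)
    next
      case False then show ?thesis by (simp add: restr_def)
    qed
  qed
qed

lemma alg_inj:
  fixes m0 :: "'v \<Rightarrow> 'f::field list"
  assumes fin: "finite (sources N)" and s0: "\<sigma>0 \<in> sources N"
    and len: "length s = l" "length s' = l"
    and eq: "alg_sum N l (m0(\<sigma>0 := s)) = alg_sum N l (m0(\<sigma>0 := s'))"
  shows "s = s'"
proof (rule nth_equalityI)
  show "length s = length s'" using len by simp
  fix j assume "j < length s"
  then have j: "j < l" using len by simp
  have nth: "alg_sum N l mm ! j = (\<Sum>\<sigma>\<in>sources N. mm \<sigma> ! j)" for mm :: "'v \<Rightarrow> 'f list"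
    unfolding alg_sum_def using j by simp
  have split: "(\<Sum>\<sigma>\<in>sources N. (m0(\<sigma>0 := t)) \<sigma> ! j) = t ! j + (\<Sum>\<sigma>\<in>sources N - {\<sigma>0}. m0 \<sigma> ! j)" for t
  proof -
    have "(\<Sum>\<sigma>\<in>sources N. (m0(\<sigma>0 := t)) \<sigma> ! j) = (m0(\<sigma>0 := t)) \<sigma>0 ! j + (\<Sum>\<sigma>\<in>sources N - {\<sigma>0}. (m0(\<sigma>0 := t)) \<sigma> ! j)"
      by (rule sum.remove[OF fin s0])
    also have "(\<Sum>\<sigma>\<in>sources N - {\<sigma>0}. (m0(\<sigma>0 := t)) \<sigma> ! j) = (\<Sum>\<sigma>\<in>sources N - {\<sigma>0}. m0 \<sigma> ! j)"
      by (rule sum.cong) auto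
    finally show ?thesis by simp
  qed
  have "alg_sum N l (m0(\<sigma>0 := s)) ! j = alg_sum N l (m0(\<sigma>0 := s')) ! j" using eq by simp
  then show "s ! j = s' ! j" unfolding nth split by simp
qed

lemma len_msg:
  assumes wfN: "wf_network N" and e: "e \<in> edges N"
    and l1: "\<forall>e x key. length (enc_src c e x key) = n" and l2: "\<forall>e Y. length (enc c e Y) = n"
  shows "length (edge_msg N c m k e) = n"
proof -
  have "edge_msg N c m k e = code_step N c m k (edge_msg N c m k) e"
    by (rule fun_cong[OF edge_msg_fix[OF wfN]])
  then show ?thesis unfolding code_step_app[of N c m k "edge_msg N c m k" e] using e l1 l2 by simp
qed




lemma finite_sample:
  fixes c :: "('v, 'e, 'f::finite) scode"
  assumes "finite (sources N)" "\<forall>\<sigma>\<in>sources N. finite (keys c \<sigma>)"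
  shows "finite (sample_space N c l)"
proof -
  let ?L = "{xs :: 'f list. set xs \<subseteq> UNIV \<and> length xs = l}"
  let ?M = "{m. \<forall>\<sigma>. (\<sigma> \<in> sources N \<longrightarrow> m \<sigma> \<in> ?L) \<and> (\<sigma> \<notin> sources N \<longrightarrow> m \<sigma> = [])}"
  let ?B = "\<Union>\<sigma>\<in>sources N. keys c \<sigma>"
  let ?K = "{k. \<forall>\<sigma>. (\<sigma> \<in> sources N \<longrightarrow> k \<sigma> \<in> ?B) \<and> (\<sigma> \<notin> sources N \<longrightarrow> k \<sigma> = 0)}"
  have fL: "finite ?L" by (rule finite_lists_length_eq) simp
  have fM: "finite ?M" by (rule finite_set_of_finite_funs[OF assms(1) fL])
  have fB: "finite ?B" by (rule finite_UN_I) (use assms in auto)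
  have fK: "finite ?K" by (rule finite_set_of_finite_funs[OF assms(1) fB])
  have "sample_space N c l \<subseteq> ?M \<times> ?K" unfolding sample_space_def by auto
  then show ?thesis by (rule finite_subset) (rule finite_cartesian_product[OF fM fK])
qed

lemma main_bound:
  fixes c :: "('v, 'e, 'f::{finite,field}) scode"
  assumes wfN: "wf_network N" and adm: "admissible N r l n c"
    and Wr: "W \<in> W_set N r" and CL: "C \<in> Lambda_set N" and WC: "W \<subseteq> C"
    and DI: "D_set N W \<subseteq> I_set N C"
  shows "l \<le> n * card (C - W)"
proof -
  define \<Omega> where "\<Omega> = sample_space N c l"
  define S where "S = sources N"
  have keysok: "\<forall>\<sigma>\<in>S. finite (keys c \<sigma>) \<and> keys c \<sigma> \<noteq> {}"
    using adm unfolding admissible_def S_def by (elim conjE) assumption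
  have lsrc: "\<forall>e x key. length (enc_src c e x key) = n" using adm unfolding admissible_def by (elim conjE) assumption
  have lenc: "\<forall>e Y. length (enc c e Y) = n" using adm unfolding admissible_def by (elim conjE) assumption
  have comp: "\<forall>(m, k) \<in> \<Omega>. dec c (restr (in_edges N (sink N)) (edge_msg N c m k)) = alg_sum N l m"
    using adm unfolding admissible_def \<Omega>_def by (elim conjE) assumption
  have sec: "\<forall>W \<in> W_set N r. mutual_info \<Omega> (\<lambda>(m, k). restr W (edge_msg N c m k)) (\<lambda>(m, k). m) = 0"
    using adm unfolding admissible_def \<Omega>_def by (elim conjE) assumption
  have finS: "finite S" unfolding S_def by (rule wf_src_fin[OF wfN])
  have fin\<Omega>: "finite \<Omega>" unfolding \<Omega>_def by (rule finite_sample) (use finS keysok in \<open>auto simp: S_def\<close>)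
  have CE: "C \<subseteq> edges N" using CL unfolding Lambda_set_def by blast
  have finE: "finite (edges N)" by (rule wf_fin[OF wfN])
  have finC: "finite C" using CE finE by (rule finite_subset)
  obtain \<sigma>0 where s0: "\<sigma>0 \<in> I_set N C" using CL unfolding Lambda_set_def by blast
  have IS: "I_set N C \<subseteq> S" unfolding I_set_def S_def by blast
  have s0S: "\<sigma>0 \<in> S" using s0 IS by blast
  define m0 :: "'v \<Rightarrow> 'f list" where "m0 = (\<lambda>\<sigma>. if \<sigma> \<in> S then replicate l 0 else [])"
  define k0 where "k0 = (\<lambda>\<sigma>. if \<sigma> \<in> S then (SOME x. x \<in> keys c \<sigma>) else (0::nat))"
  have k0k: "k0 \<sigma> \<in> keys c \<sigma>" if "\<sigma> \<in> S" for \<sigma>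
  proof -
    have "keys c \<sigma> \<noteq> {}" using keysok that by blast
    then have "\<exists>x. x \<in> keys c \<sigma>" by blast
    then have "(SOME x. x \<in> keys c \<sigma>) \<in> keys c \<sigma>" by (rule someI_ex)
    then show ?thesis unfolding k0_def using that by simp
  qed
  have om0: "(m0, k0) \<in> \<Omega>" unfolding \<Omega>_def sample_space_def
    using k0k by (auto simp: m0_def k0_def S_def)
  have ne\<Omega>: "\<Omega> \<noteq> {}" using om0 by blast
  define X where "X = (\<lambda>(m::'v \<Rightarrow> 'f list, k::'v \<Rightarrow> nat). restr W (edge_msg N c m k))"
  have mi: "mutual_info \<Omega> X (\<lambda>(m, k). m) = 0" using sec Wr unfolding X_def by blast
  define y where "y = X (m0, k0)"
  define L where "L = {xs :: 'f list. set xs \<subseteq> UNIV \<and> length xs = l}"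
  define ms where "ms = (\<lambda>s. m0(\<sigma>0 := s))"
  have ms\<Omega>: "(ms s, k0) \<in> \<Omega>" if "s \<in> L" for s
    using om0 that s0S unfolding \<Omega>_def sample_space_def ms_def L_def S_def by auto
  have "\<forall>s\<in>L. \<exists>k. (ms s, k) \<in> \<Omega> \<and> X (ms s, k) = y"
  proof
    fix s assume sL: "s \<in> L"
    obtain \<omega> where \<omega>: "\<omega> \<in> \<Omega>" "X \<omega> = X (m0, k0)" "(\<lambda>(m, k). m) \<omega> = (\<lambda>(m, k). m) (ms s, k0)"
      using MI_zero[OF fin\<Omega> ne\<Omega> mi om0 ms\<Omega>[OF sL]] by blast
    obtain mm kk where "\<omega> = (mm, kk)" by (cases \<omega>)
    then show "\<exists>k. (ms s, k) \<in> \<Omega> \<and> X (ms s, k) = y" using \<omega> unfolding y_def by auto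
  qed
  from bchoice[OF this] obtain ks where ks: "\<forall>s\<in>L. (ms s, ks s) \<in> \<Omega> \<and> X (ms s, ks s) = y" by blast
  define kk where "kk = (\<lambda>s \<sigma>. if \<sigma> \<in> I_set N C then ks s \<sigma> else k0 \<sigma>)"
  have kk\<Omega>: "(ms s, kk s) \<in> \<Omega>" if sL: "s \<in> L" for s
  proof -
    have A: "(ms s, ks s) \<in> \<Omega>" using ks sL by blast
    have B: "(ms s, k0) \<in> \<Omega>" by (rule ms\<Omega>[OF sL])
    show ?thesis using A B IS unfolding \<Omega>_def sample_space_def kk_def S_def by auto
  qed
  have Xkk: "X (ms s, kk s) = y" if sL: "s \<in> L" for s
  proof -
    have ag: "\<forall>\<sigma>\<in>D_set N W. ms s \<sigma> = ms s \<sigma> \<and> kk s \<sigma> = ks s \<sigma>"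
      using DI unfolding kk_def by auto
    have "restr W (edge_msg N c (ms s) (kk s)) = restr W (edge_msg N c (ms s) (ks s))"
    proof
      fix w show "restr W (edge_msg N c (ms s) (kk s)) w = restr W (edge_msg N c (ms s) (ks s)) w"
        using loc_D[OF wfN ag, of w c] by (simp add: restr_def)
    qed
    then show ?thesis using ks sL unfolding X_def by auto
  qed
  define \<phi> where "\<phi> = (\<lambda>s. restrict (edge_msg N c (ms s) (kk s)) (C - W))"
  define Ln where "Ln = {xs :: 'f list. set xs \<subseteq> UNIV \<and> length xs = n}"
  define P where "P = Pi\<^sub>E (C - W) (\<lambda>_. Ln)"
  have finP: "finite P" unfolding P_def Ln_def
    by (rule finite_PiE) (use finC finite_lists_length_eq[of "UNIV::'f set" n] in auto)
  have img: "\<phi> ` L \<subseteq> P"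
  proof
    fix z assume "z \<in> \<phi> ` L"
    then obtain s where z: "z = \<phi> s" by blast
    have "\<forall>e\<in>C - W. edge_msg N c (ms s) (kk s) e \<in> Ln"
      using len_msg[OF wfN _ lsrc lenc] CE unfolding Ln_def by blast
    then show "z \<in> P" unfolding z \<phi>_def P_def by (simp only: restrict_PiE_iff)
  qed
  have inj: "inj_on \<phi> L"
  proof
    fix s s' assume sL: "s \<in> L" and s'L: "s' \<in> L" and eq: "\<phi> s = \<phi> s'"
    have agC: "\<forall>e\<in>C. edge_msg N c (ms s) (kk s) e = edge_msg N c (ms s') (kk s') e"
    proof
      fix e assume eC: "e \<in> C"
      show "edge_msg N c (ms s) (kk s) e = edge_msg N c (ms s') (kk s') e"
      proof (cases "e \<in> W")
        case True
        have "X (ms s, kk s) = X (ms s', kk s')" using Xkk[OF sL] Xkk[OF s'L] by simp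
        then have "restr W (edge_msg N c (ms s) (kk s)) e = restr W (edge_msg N c (ms s') (kk s')) e"
          unfolding X_def by simp
        then show ?thesis using True by (simp add: restr_def)
      next
        case False
        have "\<phi> s e = \<phi> s' e" using eq by simp
        then show ?thesis using False eC unfolding \<phi>_def by simp
      qed
    qed
    have ag: "\<forall>\<sigma>\<in>sources N - I_set N C. ms s \<sigma> = ms s' \<sigma> \<and> kk s \<sigma> = kk s' \<sigma>"
      using s0 unfolding ms_def kk_def by auto
    have R: "restr (in_edges N (sink N)) (edge_msg N c (ms s) (kk s)) = restr (in_edges N (sink N)) (edge_msg N c (ms s') (kk s'))"
      by (rule loc_I[OF wfN agC ag])
    have "alg_sum N l (ms s) = dec c (restr (in_edges N (sink N)) (edge_msg N c (ms s) (kk s)))"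
      using comp kk\<Omega>[OF sL] by auto
    also have "\<dots> = dec c (restr (in_edges N (sink N)) (edge_msg N c (ms s') (kk s')))" using R by simp
    also have "\<dots> = alg_sum N l (ms s')" using comp kk\<Omega>[OF s'L] by auto
    finally have "alg_sum N l (m0(\<sigma>0 := s)) = alg_sum N l (m0(\<sigma>0 := s'))" unfolding ms_def .
    moreover have "length s = l" "length s' = l" using sL s'L unfolding L_def by auto
    ultimately show "s = s'" using alg_inj[OF wf_src_fin[OF wfN]] s0S unfolding S_def by blast
  qed
  have "card L \<le> card P" by (rule card_inj_on_le[OF inj img finP])
  moreover have "card L = card (UNIV :: 'f set) ^ l" unfolding L_def by (rule card_lists_length_eq) simp
  moreover have "card P = (card (UNIV :: 'f set) ^ n) ^ card (C - W)"
  proof -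
    have "card P = (\<Prod>i\<in>C - W. card Ln)" unfolding P_def by (rule card_PiE) (use finC in auto)
    also have "card Ln = card (UNIV :: 'f set) ^ n" unfolding Ln_def by (rule card_lists_length_eq) simp
    finally show ?thesis by simp
  qed
  ultimately have le: "card (UNIV :: 'f set) ^ l \<le> card (UNIV :: 'f set) ^ (n * card (C - W))" by (simp add: power_mult)
  have "card {0::'f, 1} \<le> card (UNIV :: 'f set)" by (rule card_mono) auto
  then have "1 < card (UNIV :: 'f set)" by simp
  then show ?thesis using le by (rule power_le_imp_le_exp)
qed




lemma wf_sink: "wf_network N \<Longrightarrow> sink N \<in> nodes N \<and> sink N \<notin> sources N"
  unfolding wf_network_def by blast

lemma wf_src_iff: "wf_network N \<Longrightarrow> u \<in> nodes N \<Longrightarrow> (u \<in> sources N \<longleftrightarrow> in_edges N u = {})"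
  unfolding wf_network_def by blast

lemma wf_tl: "wf_network N \<Longrightarrow> e \<in> edges N \<Longrightarrow> tl N e \<in> nodes N"
  unfolding wf_network_def by blast

lemma sources_ne:
  assumes wfN: "wf_network N"
  shows "sources N \<noteq> {}"
proof -
  have s: "sink N \<in> nodes N" "sink N \<notin> sources N" using wf_sink[OF wfN] by auto
  then have "in_edges N (sink N) \<noteq> {}" using wf_src_iff[OF wfN s(1)] by blast
  then obtain e0 where "e0 \<in> in_edges N (sink N)" by blast
  then have e0: "e0 \<in> edges N" unfolding in_edges_def by blast
  obtain e where e: "e \<in> edges N" and min: "\<And>d. (d, e) \<in> Rel N \<Longrightarrow> d \<notin> edges N"
    using wfE_min[OF Rel_wf[OF wf_fin[OF wfN] wf_acyc[OF wfN]] e0] by blast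
  have tn: "tl N e \<in> nodes N" by (rule wf_tl[OF wfN e])
  have "tl N e \<in> sources N"
  proof (rule ccontr)
    assume "tl N e \<notin> sources N"
    then have "in_edges N (tl N e) \<noteq> {}" using wf_src_iff[OF wfN tn] by blast
    then obtain d where d: "d \<in> in_edges N (tl N e)" by blast
    then have "(d, e) \<in> Rel N" using e unfolding in_edges_def Rel_def by blast
    moreover have "d \<in> edges N" using d unfolding in_edges_def by blast
    ultimately show False using min by blast
  qed
  then show ?thesis by blast
qed

lemma cut_bound_ge:
  fixes N :: "('v, 'e) network"
  assumes wfN: "wf_network N"
    and H: "\<And>W C. W \<in> W_set N r \<Longrightarrow> C \<in> Lambda_set N \<Longrightarrow> W \<subseteq> C \<Longrightarrow> D_set N W \<subseteq> I_set N C
        \<Longrightarrow> R \<le> real (card C) - real (card W)"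
  shows "R \<le> cut_bound N r"
proof -
  define A where "A = {real (card C) - real (card W) | W C.
      W \<in> W_set N r \<and> C \<in> Lambda_set N \<and> W \<subseteq> C \<and> D_set N W \<subseteq> I_set N C}"
  have finE: "finite (edges N)" by (rule wf_fin[OF wfN])
  have "A \<subseteq> (\<lambda>(W, C). real (card C) - real (card W)) ` (Pow (edges N) \<times> Pow (edges N))"
    unfolding A_def W_set_def Lambda_set_def by auto
  then have finA: "finite A" by (rule finite_subset) (use finE in simp)
  obtain \<sigma> where \<sigma>: "\<sigma> \<in> sources N" using sources_ne[OF wfN] by blast
  have "\<not> node_path_in N (edges N - edges N) \<sigma> (sink N)"
    unfolding node_path_in_def path_in_def by simp
  then have "\<sigma> \<in> I_set N (edges N)" using \<sigma> unfolding I_set_def by blast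
  then have "edges N \<in> Lambda_set N" unfolding Lambda_set_def by blast
  moreover have "{} \<in> W_set N r" unfolding W_set_def by simp
  moreover have "D_set N {} = {}" unfolding D_set_def by simp
  ultimately have "real (card (edges N)) - real (card ({}::'e set)) \<in> A" unfolding A_def by blast
  then have neA: "A \<noteq> {}" by blast
  have "\<forall>a\<in>A. R \<le> a" unfolding A_def using H by blast
  then have "R \<le> Min A" using finA neA by (simp add: Min_ge_iff)
  then show ?thesis unfolding cut_bound_def A_def .
qed

theorem theorem1:
  fixes N :: "('v, 'e) network" and r :: nat and R :: real
  assumes "wf_network N"
    and "achievable TYPE('f::{finite,field}) N r R"
  shows "R \<le> cut_bound N r"
proof (rule cut_bound_ge[OF assms(1)])
  fix W C assume Wr: "W \<in> W_set N r" and CL: "C \<in> Lambda_set N" and WC: "W \<subseteq> C"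
    and DI: "D_set N W \<subseteq> I_set N C"
  show "R \<le> real (card C) - real (card W)"
  proof (rule ccontr)
    assume "\<not> R \<le> real (card C) - real (card W)"
    then have eps: "R - (real (card C) - real (card W)) > 0" by simp
    have ach: "\<forall>\<epsilon>>0. \<exists>l n (c :: ('v, 'e, 'f) scode). admissible N r l n c \<and> real l / real n > R - \<epsilon>"
      using assms(2) unfolding achievable_def by blast
    obtain l n and c :: "('v, 'e, 'f) scode" where adm: "admissible N r l n c"
      and gt: "real l / real n > R - (R - (real (card C) - real (card W)))"
      using ach eps by blast
    have npos: "n > 0" using adm unfolding admissible_def by blast
    have lb: "l \<le> n * card (C - W)" by (rule main_bound[OF assms(1) adm Wr CL WC DI])
    have CE: "C \<subseteq> edges N" using CL unfolding Lambda_set_def by blast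
    have finC: "finite C" using CE wf_fin[OF assms(1)] by (rule finite_subset)
    have cd: "card (C - W) = card C - card W" using WC finC by (simp add: card_Diff_subset finite_subset)
    have cle: "card W \<le> card C" using WC finC by (simp add: card_mono)
    have "real l \<le> real n * real (card (C - W))" using lb by (simp add: of_nat_mult[symmetric] del: of_nat_mult)
    then have "real l / real n \<le> real (card (C - W))" using npos by (simp add: divide_le_eq mult.commute)
    also have "real (card (C - W)) = real (card C) - real (card W)" using cd cle by simp
    finally show False using gt by simp
  qed
qed


end
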